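(* Let $A$ and $B$ be observed binary variables. Every functional causal structure over $A,B$ whose latent variables are discrete with finitely many values (not necessarily binary) is observationally equivalent to a functional causal structure over $A,B$ all of whose latent variables are binary. Equivalently, every observational equivalence class of such functional causal structures contains one in which all latent variables are binary.
   Context: A functional causal structure over observed variables $A,B$ is a directed acyclic graph together with a specification of each observed variable as a function of its causal parents; all latent (unobserved) variables are parentless. A causal model is a functional causal structure together with a probability distribution over the values of each (independent) latent variable; each causal model induces a joint distribution $\mathbb{P}(A,B)$. By convention latent variables are nontrivial: every value of every latent variable has probability strictly between $0$ and $1$. The set of joint distributions of a functional causal structure is the set of all $\mathbb{P}(A,B)$ arising from some choice of such latent distributions. Two functional causal structures are observationally equivalent if they have the same set of joint distributions over the observed variables. *)

theory Defs
  imports Complex_Main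
begin

text \<open>
Latent variables are numbered 0, ..., nlat - 1; latent i takes values in
{0..<card_lat i}. All latents are parentless. The observed variables are
functions of their parents: A's parents are the latents in parA plus B
(iff B_to_A); B's parents are the latents in parB plus A (iff A_to_B).
A latent assignment is a function nat => nat; fA gets the latent assignment
and the value of B, fB gets the latent assignment and the value of A; the
locality conditions in wf_fcs say that they depend only on the parents.
\<close>

record fcs =
  nlat :: nat
  card_lat :: "nat \<Rightarrow> nat"
  A_to_B :: bool
  B_to_A :: bool
  parA :: "nat set"
  parB :: "nat set"
  fA :: "(nat \<Rightarrow> nat) \<Rightarrow> bool \<Rightarrow> bool"
  fB :: "(nat \<Rightarrow> nat) \<Rightarrow> bool \<Rightarrow> bool"

text \<open>Well-formedness: acyclic (no 2-cycle between A and B), latent parents are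
latent variables, every latent is discrete with finitely many (at least two,
so that it can be nontrivial) values, and each observed variable depends only
on its parents.\<close>

definition wf_fcs :: "fcs \<Rightarrow> bool" where
  "wf_fcs S \<longleftrightarrow>
     \<not> (A_to_B S \<and> B_to_A S) \<and>
     parA S \<subseteq> {..<nlat S} \<and> parB S \<subseteq> {..<nlat S} \<and>
     (\<forall>i<nlat S. 2 \<le> card_lat S i) \<and>
     (\<forall>l l' b b'. (\<forall>i\<in>parA S. l i = l' i) \<and> (B_to_A S \<longrightarrow> b = b')
         \<longrightarrow> fA S l b = fA S l' b') \<and>
     (\<forall>l l' a a'. (\<forall>i\<in>parB S. l i = l' i) \<and> (A_to_B S \<longrightarrow> a = a')
         \<longrightarrow> fB S l a = fB S l' a')"

definition binary_fcs :: "fcs \<Rightarrow> bool" where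
  "binary_fcs S \<longleftrightarrow> (\<forall>i<nlat S. card_lat S i = 2)"

text \<open>Finite set of latent assignments (values outside the latent index range
are normalised to 0).\<close>

definition assignments :: "fcs \<Rightarrow> (nat \<Rightarrow> nat) set" where
  "assignments S = {l. (\<forall>i<nlat S. l i < card_lat S i) \<and> (\<forall>i\<ge>nlat S. l i = 0)}"

text \<open>Observed values (A, B) determined by a latent assignment, evaluating the
DAG in topological order.\<close>

definition obs :: "fcs \<Rightarrow> (nat \<Rightarrow> nat) \<Rightarrow> bool \<times> bool" where
  "obs S l = (if B_to_A S
              then (let b = fB S l False in (fA S l b, b))
              else (let a = fA S l False in (a, fB S l a)))"

definition latent_dist :: "fcs \<Rightarrow> (nat \<Rightarrow> nat \<Rightarrow> real) \<Rightarrow> bool" where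
  "latent_dist S p \<longleftrightarrow>
     (\<forall>i<nlat S. (\<forall>v<card_lat S i. 0 < p i v \<and> p i v < 1) \<and>
                 (\<Sum>v<card_lat S i. p i v) = 1)"

definition induced :: "fcs \<Rightarrow> (nat \<Rightarrow> nat \<Rightarrow> real) \<Rightarrow> bool \<Rightarrow> bool \<Rightarrow> real" where
  "induced S p a b =
     (\<Sum>l\<in>assignments S. (\<Prod>i<nlat S. p i (l i)) * (if obs S l = (a, b) then 1 else 0))"

definition joint_dists :: "fcs \<Rightarrow> (bool \<Rightarrow> bool \<Rightarrow> real) set" where
  "joint_dists S = {P. \<exists>p. latent_dist S p \<and> P = induced S p}"

definition obs_equiv :: "fcs \<Rightarrow> fcs \<Rightarrow> bool" where
  "obs_equiv S T \<longleftrightarrow> joint_dists S = joint_dists T"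

end

theory Submission
  imports Defs
begin

definition dec :: "fcs \<Rightarrow> nat \<Rightarrow> (nat \<Rightarrow> nat) \<Rightarrow> nat \<Rightarrow> nat" where
  "dec S j l = (l(nlat S := 0))(j := (if l j = card_lat S j - 2 \<and> l (nlat S) = 1
                                       then card_lat S j - 1 else l j))"

definition split_fcs :: "fcs \<Rightarrow> nat \<Rightarrow> fcs" where
  "split_fcs S j = S\<lparr>nlat := Suc (nlat S),
     card_lat := (card_lat S)(j := card_lat S j - 1, nlat S := 2),
     parA := (if j \<in> parA S then insert (nlat S) (parA S) else parA S),
     parB := (if j \<in> parB S then insert (nlat S) (parB S) else parB S),
     fA := (\<lambda>l b. fA S (dec S j l) b),
     fB := (\<lambda>l a. fB S (dec S j l) a)\<rparr>"

lemma split_simps: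
  "nlat (split_fcs S j) = Suc (nlat S)"
  "card_lat (split_fcs S j) = (card_lat S)(j := card_lat S j - 1, nlat S := 2)"
  "A_to_B (split_fcs S j) = A_to_B S"
  "B_to_A (split_fcs S j) = B_to_A S"
  "parA (split_fcs S j) = (if j \<in> parA S then insert (nlat S) (parA S) else parA S)"
  "parB (split_fcs S j) = (if j \<in> parB S then insert (nlat S) (parB S) else parB S)"
  "fA (split_fcs S j) = (\<lambda>l b. fA S (dec S j l) b)"
  "fB (split_fcs S j) = (\<lambda>l a. fB S (dec S j l) a)"
  by (simp_all add: split_fcs_def)

lemma finite_assignments: "finite (assignments S)"
proof -
  let ?B = "{..< (\<Sum>i<nlat S. card_lat S i)}"
  have bnd: "f x < (\<Sum>i<nlat S. card_lat S i)" if f: "f \<in> assignments S" and x: "x < nlat S" for f x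
  proof -
    have "f x < card_lat S x" using f x by (simp add: assignments_def)
    also have "card_lat S x \<le> (\<Sum>i<nlat S. card_lat S i)"
      using x by (intro member_le_sum) auto
    finally show ?thesis .
  qed
  have "assignments S \<subseteq> {f. \<forall>x. (x \<in> {..<nlat S} \<longrightarrow> f x \<in> ?B) \<and> (x \<notin> {..<nlat S} \<longrightarrow> f x = 0)}"
    using bnd by (auto simp: assignments_def)
  moreover have "finite {f. \<forall>x. (x \<in> {..<nlat S} \<longrightarrow> f x \<in> ?B) \<and> (x \<notin> {..<nlat S} \<longrightarrow> f x = (0::nat))}"
    by (rule finite_set_of_finite_funs) auto
  ultimately show ?thesis by (rule finite_subset)
qed

lemma obs_split: "obs (split_fcs S j) l = obs S (dec S j l)"
  by (simp add: obs_def split_simps Let_def)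

lemma dec_in:
  assumes j: "j < nlat S" and k: "3 \<le> card_lat S j" and l: "l \<in> assignments (split_fcs S j)"
  shows "dec S j l \<in> assignments S"
proof -
  have l1: "\<And>i. i < Suc (nlat S) \<Longrightarrow> l i < ((card_lat S)(j := card_lat S j - 1, nlat S := 2)) i"
    and l2: "\<And>i. i \<ge> Suc (nlat S) \<Longrightarrow> l i = 0"
    using l by (auto simp: assignments_def split_simps)
  have "dec S j l i < card_lat S i" if i: "i < nlat S" for i
  proof (cases "i = j")
    case True
    have "l j < card_lat S j - 1" using l1[of j] j by simp
    then show ?thesis using True j k by (auto simp: dec_def)
  next
    case False
    then show ?thesis using l1[of i] i by (auto simp: dec_def)
  qed
  moreover have "dec S j l i = 0" if i: "i \<ge> nlat S" for i
    using l2[of i] i j by (cases "i = nlat S") (auto simp: dec_def)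
  ultimately show ?thesis by (simp add: assignments_def)
qed

lemma dec_eqD:
  assumes "dec S j l = m" "i \<noteq> j" "i \<noteq> nlat S"
  shows "l i = m i"
  using fun_cong[OF assms(1), of i] assms(2,3) by (simp add: dec_def)

lemma fiber_char:
  assumes j: "j < nlat S" and k: "3 \<le> card_lat S j" and m: "m \<in> assignments S"
  shows "{l \<in> assignments (split_fcs S j). dec S j l = m} =
    (\<lambda>(x,y). m(j:=x, nlat S:=y)) ` {(x,y). x < card_lat S j - 1 \<and> y < 2 \<and>
        (if x = card_lat S j - 2 \<and> y = 1 then card_lat S j - 1 else x) = m j}"
proof (intro set_eqI iffI)
  have mn: "m (nlat S) = 0" using m by (simp add: assignments_def)
  fix l assume "l \<in> {l \<in> assignments (split_fcs S j). dec S j l = m}"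
  then have l: "l \<in> assignments (split_fcs S j)" and d: "dec S j l = m" by auto
  have l1: "\<And>i. i < Suc (nlat S) \<Longrightarrow> l i < ((card_lat S)(j := card_lat S j - 1, nlat S := 2)) i"
    and l2: "\<And>i. i \<ge> Suc (nlat S) \<Longrightarrow> l i = 0"
    using l by (auto simp: assignments_def split_simps)
  have m2: "\<And>i. i \<ge> nlat S \<Longrightarrow> m i = 0" using m by (simp add: assignments_def)
  have eq: "l = m(j := l j, nlat S := l (nlat S))"
  proof
    fix i show "l i = (m(j := l j, nlat S := l (nlat S))) i"
    proof (cases "i = j \<or> i = nlat S")
      case True then show ?thesis by auto
    next
      case False
      then show ?thesis using dec_eqD[OF d, of i] by auto
    qed
  qed
  have "l j < card_lat S j - 1" using l1[of j] j by simp
  moreover have "l (nlat S) < 2" using l1[of "nlat S"] by simp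
  moreover have "(if l j = card_lat S j - 2 \<and> l (nlat S) = 1 then card_lat S j - 1 else l j) = m j"
    using fun_cong[OF d, of j] j by (simp add: dec_def)
  ultimately show "l \<in> (\<lambda>(x,y). m(j:=x, nlat S:=y)) ` {(x,y). x < card_lat S j - 1 \<and> y < 2 \<and>
        (if x = card_lat S j - 2 \<and> y = 1 then card_lat S j - 1 else x) = m j}"
    using eq by (intro image_eqI[of _ _ "(l j, l (nlat S))"]) auto
next
  have mn: "m (nlat S) = 0" using m by (simp add: assignments_def)
  have m1: "\<And>i. i < nlat S \<Longrightarrow> m i < card_lat S i" and m2: "\<And>i. i \<ge> nlat S \<Longrightarrow> m i = 0"
    using m by (auto simp: assignments_def)
  fix l assume "l \<in> (\<lambda>(x,y). m(j:=x, nlat S:=y)) ` {(x,y). x < card_lat S j - 1 \<and> y < 2 \<and>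
        (if x = card_lat S j - 2 \<and> y = 1 then card_lat S j - 1 else x) = m j}"
  then obtain x y where l: "l = m(j:=x, nlat S:=y)" and x: "x < card_lat S j - 1" and y: "y < 2"
    and c: "(if x = card_lat S j - 2 \<and> y = 1 then card_lat S j - 1 else x) = m j" by auto
  have jn: "j \<noteq> nlat S" using j by simp
  have "l \<in> assignments (split_fcs S j)"
    unfolding assignments_def split_simps
  proof (safe)
    fix i assume i: "i < Suc (nlat S)"
    show "l i < ((card_lat S)(j := card_lat S j - 1, nlat S := 2)) i"
      using i x y m1[of i] jn by (auto simp: l less_Suc_eq)
  next
    fix i assume i: "Suc (nlat S) \<le> i"
    then show "l i = 0" using m2[of i] j by (auto simp: l)
  qed
  moreover have "dec S j l = m"
  proof
    fix i show "dec S j l i = m i"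
      using c jn mn by (auto simp: dec_def l)
  qed
  ultimately show "l \<in> {l \<in> assignments (split_fcs S j). dec S j l = m}" by auto
qed

lemma prod_upd:
  fixes n :: nat
  assumes j: "j < n" and r1: "\<forall>i<n. i\<noteq>j \<longrightarrow> p i = p' i"
  shows "(\<Prod>i<Suc n. p' i ((m(j:=x, n:=y)) i)) = p' j x * (\<Prod>i\<in>{..<n}-{j}. p i (m i)) * p' n y"
proof -
  have "(\<Prod>i<Suc n. p' i ((m(j:=x, n:=y)) i)) = (\<Prod>i<n. p' i ((m(j:=x, n:=y)) i)) * p' n y"
    by simp
  also have "(\<Prod>i<n. p' i ((m(j:=x, n:=y)) i)) = p' j x * (\<Prod>i\<in>{..<n}-{j}. p' i ((m(j:=x, n:=y)) i))"
    using j by (subst prod.remove[of "{..<n}" j]) auto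
  also have "(\<Prod>i\<in>{..<n}-{j}. p' i ((m(j:=x, n:=y)) i)) = (\<Prod>i\<in>{..<n}-{j}. p i (m i))"
    using r1 by (intro prod.cong) auto
  finally show ?thesis .
qed

lemma prod_rem:
  fixes n :: nat
  assumes j: "j < n"
  shows "(\<Prod>i<n. p i (m i)) = p j (m j) * (\<Prod>i\<in>{..<n}-{j}. p i (m i))"
  using j by (subst prod.remove[of "{..<n}" j]) auto

lemma fiber_weight:
  fixes p p' :: "nat \<Rightarrow> nat \<Rightarrow> real"
  assumes j: "j < nlat S" and k: "3 \<le> card_lat S j" and m: "m \<in> assignments S"
    and r1: "\<forall>i<nlat S. i\<noteq>j \<longrightarrow> p i = p' i"
    and r2: "\<forall>v < card_lat S j - 2. p j v = p' j v"
    and r3: "p j (card_lat S j - 2) = p' j (card_lat S j - 2) * p' (nlat S) 0"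
    and r4: "p j (card_lat S j - 1) = p' j (card_lat S j - 2) * p' (nlat S) 1"
    and r5: "p' (nlat S) 0 + p' (nlat S) 1 = 1"
  shows "(\<Sum>l\<in>{l \<in> assignments (split_fcs S j). dec S j l = m}. \<Prod>i<Suc (nlat S). p' i (l i))
         = (\<Prod>i<nlat S. p i (m i))"
proof -
  let ?n = "nlat S" and ?k = "card_lat S j"
  let ?R = "\<Prod>i\<in>{..<?n}-{j}. p i (m i)"
  let ?P = "{(x,y::nat). x < ?k - 1 \<and> y < 2 \<and> (if x = ?k - 2 \<and> y = 1 then ?k - 1 else x) = m j}"
  have jn: "j \<noteq> ?n" using j by simp
  have inj: "inj_on (\<lambda>(x,y). m(j:=x, ?n:=y)) ?P"
  proof (rule inj_onI, clarsimp)
    fix x y x' y' assume "m(j := x, ?n := y) = m(j := x', ?n := y')"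
    from fun_cong[OF this, of j] fun_cong[OF this, of ?n] jn show "x = x' \<and> y = y'" by simp
  qed
  have "(\<Sum>l\<in>{l \<in> assignments (split_fcs S j). dec S j l = m}. \<Prod>i<Suc ?n. p' i (l i))
      = (\<Sum>(x,y)\<in>?P. \<Prod>i<Suc ?n. p' i ((m(j:=x, ?n:=y)) i))"
    unfolding fiber_char[OF j k m] by (subst sum.reindex[OF inj]) (simp add: case_prod_unfold)
  also have "\<dots> = (\<Sum>(x,y)\<in>?P. p' j x * ?R * p' ?n y)"
    using prod_upd[OF j r1] by (intro sum.cong) auto
  also have "\<dots> = (\<Prod>i<nlat S. p i (m i))"
  proof -
    have mj: "m j < ?k" using m j by (simp add: assignments_def)
    consider "m j < ?k - 2" | "m j = ?k - 2" | "m j = ?k - 1" using mj k by linarith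
    then show ?thesis
    proof cases
      case 1
      then have "?P = {(m j, 0), (m j, 1)}" using k by auto
      have ne: "(m j, 0::nat) \<noteq> (m j, 1)" by simp
      have "(\<Sum>(x,y)\<in>?P. p' j x * ?R * p' ?n y) = p' j (m j) * ?R * p' ?n 0 + p' j (m j) * ?R * p' ?n 1"
        using \<open>?P = _\<close> ne by simp
      also have "\<dots> = p' j (m j) * ?R * (p' ?n 0 + p' ?n 1)" by (rule distrib_left[symmetric])
      also have "\<dots> = p j (m j) * ?R" using r5 r2 1 by simp
      finally show ?thesis using prod_rem[OF j, of p m] by simp
    next
      case 2
      then have "?P = {(?k - 2, 0)}" using k by auto
      then show ?thesis using 2 r3 prod_rem[OF j, of p m] by (simp add: mult_ac)
    next
      case 3
      then have "?P = {(?k - 2, 1)}" using k by auto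
      then show ?thesis using 3 r4 prod_rem[OF j, of p m] by (simp add: mult_ac)
    qed
  qed
  finally show ?thesis .
qed

lemma core:
  fixes p p' :: "nat \<Rightarrow> nat \<Rightarrow> real"
  assumes j: "j < nlat S" and k: "3 \<le> card_lat S j"
    and r1: "\<forall>i<nlat S. i\<noteq>j \<longrightarrow> p i = p' i"
    and r2: "\<forall>v < card_lat S j - 2. p j v = p' j v"
    and r3: "p j (card_lat S j - 2) = p' j (card_lat S j - 2) * p' (nlat S) 0"
    and r4: "p j (card_lat S j - 1) = p' j (card_lat S j - 2) * p' (nlat S) 1"
    and r5: "p' (nlat S) 0 + p' (nlat S) 1 = 1"
  shows "induced (split_fcs S j) p' a b = induced S p a b"
proof -
  let ?S' = "split_fcs S j"
  define g where "g m = (if obs S m = (a,b) then 1 else 0 :: real)" for m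
  define W' where "W' l = (\<Prod>i<Suc (nlat S). p' i (l i))" for l
  define W where "W m = (\<Prod>i<nlat S. p i (m i))" for m
  have "induced ?S' p' a b = (\<Sum>l\<in>assignments ?S'. W' l * g (dec S j l))"
    by (simp add: induced_def W'_def g_def obs_split split_simps)
  also have "\<dots> = (\<Sum>m\<in>assignments S. \<Sum>l\<in>{l. l \<in> assignments ?S' \<and> dec S j l = m}. W' l * g (dec S j l))"
    by (rule sum.group[symmetric]) (use finite_assignments dec_in[OF j k] in auto)
  also have "\<dots> = (\<Sum>m\<in>assignments S. g m * (\<Sum>l\<in>{l. l \<in> assignments ?S' \<and> dec S j l = m}. W' l))"
    by (intro sum.cong refl) (auto simp: sum_distrib_left mult.commute intro!: sum.cong)
  also have "\<dots> = (\<Sum>m\<in>assignments S. g m * W m)"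
    using fiber_weight[OF j k _ r1 r2 r3 r4 r5] unfolding W'_def W_def
    by (intro sum.cong refl) simp
  also have "\<dots> = induced S p a b"
    by (simp add: induced_def W_def g_def mult.commute)
  finally show ?thesis .
qed

lemma wf_split:
  assumes wf: "wf_fcs S" and j: "j < nlat S" and k: "3 \<le> card_lat S j"
  shows "wf_fcs (split_fcs S j)"
proof -
  have locA: "\<And>l l' b b'. (\<forall>i\<in>parA S. l i = l' i) \<and> (B_to_A S \<longrightarrow> b = b') \<Longrightarrow> fA S l b = fA S l' b'"
    and locB: "\<And>l l' a a'. (\<forall>i\<in>parB S. l i = l' i) \<and> (A_to_B S \<longrightarrow> a = a') \<Longrightarrow> fB S l a = fB S l' a'"
    and pA: "parA S \<subseteq> {..<nlat S}" and pB: "parB S \<subseteq> {..<nlat S}"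
    and c2: "\<forall>i<nlat S. 2 \<le> card_lat S i" and ac: "\<not> (A_to_B S \<and> B_to_A S)"
    using wf unfolding wf_fcs_def by simp_all
  have decP: "\<forall>i\<in>P. dec S j l i = dec S j l' i"
    if P: "P \<subseteq> {..<nlat S}" and ag: "\<forall>i\<in>(if j \<in> P then insert (nlat S) P else P). l i = l' i"
    for P :: "nat set" and l l' :: "nat \<Rightarrow> nat"
  proof
    fix i assume i: "i \<in> P"
    then have "i \<noteq> nlat S" using P by auto
    then show "dec S j l i = dec S j l' i"
      using i ag by (cases "i = j") (auto simp: dec_def)
  qed
  show ?thesis
    unfolding wf_fcs_def split_simps
  proof (intro conjI allI impI)
    show "\<not> (A_to_B S \<and> B_to_A S)" by (rule ac)
    show "(if j \<in> parA S then insert (nlat S) (parA S) else parA S) \<subseteq> {..<Suc (nlat S)}"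
      using pA by auto
    show "(if j \<in> parB S then insert (nlat S) (parB S) else parB S) \<subseteq> {..<Suc (nlat S)}"
      using pB by auto
    fix i assume "i < Suc (nlat S)"
    then show "2 \<le> ((card_lat S)(j := card_lat S j - 1, nlat S := 2)) i"
      using c2 k by (auto simp: less_Suc_eq)
  next
    fix l l' :: "nat \<Rightarrow> nat" and b b' :: bool
    assume "(\<forall>i\<in>(if j \<in> parA S then insert (nlat S) (parA S) else parA S). l i = l' i) \<and> (B_to_A S \<longrightarrow> b = b')"
    then have ag: "\<forall>i\<in>(if j \<in> parA S then insert (nlat S) (parA S) else parA S). l i = l' i"
      and bb: "B_to_A S \<longrightarrow> b = b'" by auto
    have "\<forall>i\<in>parA S. dec S j l i = dec S j l' i" by (rule decP[OF pA ag])
    then show "fA S (dec S j l) b = fA S (dec S j l') b'"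
      using bb by (intro locA) simp
  next
    fix l l' :: "nat \<Rightarrow> nat" and a a' :: bool
    assume "(\<forall>i\<in>(if j \<in> parB S then insert (nlat S) (parB S) else parB S). l i = l' i) \<and> (A_to_B S \<longrightarrow> a = a')"
    then have ag: "\<forall>i\<in>(if j \<in> parB S then insert (nlat S) (parB S) else parB S). l i = l' i"
      and bb: "A_to_B S \<longrightarrow> a = a'" by auto
    have "\<forall>i\<in>parB S. dec S j l i = dec S j l' i" by (rule decP[OF pB ag])
    then show "fB S (dec S j l) a = fB S (dec S j l') a'"
      using bb by (intro locB) simp
  qed
qed

lemma sum_split2:
  fixes f :: "nat \<Rightarrow> real"
  assumes "2 \<le> k"
  shows "(\<Sum>v<k. f v) = (\<Sum>v<k-2. f v) + f (k-2) + f (k-1)"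
proof -
  obtain r where "k = Suc (Suc r)" using assms by (metis add_2_eq_Suc le_Suc_ex)
  then show ?thesis by simp
qed

lemma sum_split1:
  fixes f :: "nat \<Rightarrow> real"
  assumes "2 \<le> k"
  shows "(\<Sum>v<k-1. f v) = (\<Sum>v<k-2. f v) + f (k-2)"
proof -
  obtain r where "k = Suc (Suc r)" using assms by (metis add_2_eq_Suc le_Suc_ex)
  then show ?thesis by simp
qed

lemma prod_lt1:
  fixes a b :: real
  assumes "0 < a" "a < 1" "0 < b" "b < 1"
  shows "a * b < 1"
proof -
  have "a * b \<le> a * 1" using assms by (intro mult_left_mono) auto
  then show ?thesis using assms by linarith
qed

lemma dists_split:
  assumes j: "j < nlat S" and k: "3 \<le> card_lat S j"
  shows "joint_dists (split_fcs S j) = joint_dists S"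
proof (intro set_eqI iffI)
  let ?n = "nlat S" and ?k = "card_lat S j"
  have jn: "j \<noteq> ?n" using j by simp
  fix P assume "P \<in> joint_dists (split_fcs S j)"
  then obtain p' where ld: "latent_dist (split_fcs S j) p'" and P: "P = induced (split_fcs S j) p'"
    by (auto simp: joint_dists_def)
  have ld': "\<And>i v. i < Suc ?n \<Longrightarrow> v < ((card_lat S)(j := ?k - 1, ?n := 2)) i \<Longrightarrow> 0 < p' i v \<and> p' i v < 1"
    and ls': "\<And>i. i < Suc ?n \<Longrightarrow> (\<Sum>v<((card_lat S)(j := ?k - 1, ?n := 2)) i. p' i v) = 1"
    using ld by (auto simp: latent_dist_def split_simps)
  define p where "p = p'(j := (\<lambda>v. if v < ?k - 2 then p' j v else if v = ?k - 2
       then p' j (?k - 2) * p' ?n 0 else p' j (?k - 2) * p' ?n 1))"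
  have n01: "p' ?n 0 + p' ?n 1 = 1" using ls'[of ?n] by (simp add: numeral_2_eq_2)
  have pn0: "0 < p' ?n 0 \<and> p' ?n 0 < 1" "0 < p' ?n 1 \<and> p' ?n 1 < 1" using ld'[of ?n] by auto
  have pjk: "0 < p' j (?k-2) \<and> p' j (?k-2) < 1" using ld'[of j "?k-2"] j k jn by auto
  have "latent_dist S p"
    unfolding latent_dist_def
  proof (intro allI impI conjI)
    fix i v assume i: "i < ?n" and v: "v < card_lat S i"
    show "0 < p i v" "p i v < 1"
    proof -
      have "0 < p i v \<and> p i v < 1"
      proof (cases "i = j")
        case True
        then show ?thesis using v pn0 pjk ld'[of j v] j jn
          by (auto simp: p_def intro: prod_lt1)
      next
        case False
        then show ?thesis using ld'[of i v] i v jn by (auto simp: p_def)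
      qed
      then show "0 < p i v" "p i v < 1" by auto
    qed
  next
    fix i assume i: "i < ?n"
    show "(\<Sum>v<card_lat S i. p i v) = 1"
    proof (cases "i = j")
      case True
      have h1: "(\<Sum>v<?k. p j v) = (\<Sum>v<?k-2. p j v) + (p j (?k-2) + p j (?k-1))"
        using k sum_split2[of ?k "p j"] by (simp add: add.assoc)
      have h2: "(\<Sum>v<?k-2. p j v) = (\<Sum>v<?k-2. p' j v)" by (simp add: p_def)
      have h3: "p j (?k-2) + p j (?k-1) = p' j (?k-2)"
      proof -
        have e1: "p j (?k-2) = p' j (?k-2) * p' ?n 0" using k by (simp add: p_def)
        have "?k - 1 \<noteq> ?k - 2" "\<not> ?k - 1 < ?k - 2" using k by auto
        then have e2: "p j (?k-1) = p' j (?k-2) * p' ?n 1" by (simp add: p_def)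
        have "p' j (?k-2) * p' ?n 0 + p' j (?k-2) * p' ?n 1 = p' j (?k-2) * (p' ?n 0 + p' ?n 1)"
          by (simp add: distrib_left)
        then show ?thesis unfolding e1 e2 using n01 by simp
      qed
      have h4: "(\<Sum>v<?k-1. p' j v) = 1" using ls'[of j] j jn by simp
      have "(\<Sum>v<?k. p j v) = 1"
        using h1 h2 h3 h4 sum_split1[of ?k "p' j"] k by simp
      then show ?thesis using True by simp
    next
      case False
      then show ?thesis using ls'[of i] i jn by (simp add: p_def)
    qed
  qed
  moreover have "induced (split_fcs S j) p' = induced S p"
  proof (intro ext)
    fix a b
    show "induced (split_fcs S j) p' a b = induced S p a b"
      by (rule core[OF j k]) (use k jn n01 in \<open>auto simp: p_def\<close>)
  qed
  ultimately show "P \<in> joint_dists S" using P by (auto simp: joint_dists_def)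
next
  let ?n = "nlat S" and ?k = "card_lat S j"
  have jn: "j \<noteq> ?n" using j by simp
  fix P assume "P \<in> joint_dists S"
  then obtain p where ld: "latent_dist S p" and P: "P = induced S p"
    by (auto simp: joint_dists_def)
  have ld1: "\<And>i v. i < ?n \<Longrightarrow> v < card_lat S i \<Longrightarrow> 0 < p i v \<and> p i v < 1"
    and ls1: "\<And>i. i < ?n \<Longrightarrow> (\<Sum>v<card_lat S i. p i v) = 1"
    using ld by (auto simp: latent_dist_def)
  define s where "s = p j (?k-2) + p j (?k-1)"
  define q where "q = p j (?k-2) / s"
  define p' where "p' = p(j := (\<lambda>v. if v = ?k - 2 then s else p j v), ?n := (\<lambda>v. if v = 0 then q else 1 - q))"
  have a1: "0 < p j (?k-2) \<and> p j (?k-2) < 1" and a2: "0 < p j (?k-1) \<and> p j (?k-1) < 1"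
    using ld1[of j "?k-2"] ld1[of j "?k-1"] j k by auto
  have spos: "0 < s" using a1 a2 by (simp add: s_def)
  have sum1: "(\<Sum>v<?k-2. p j v) + s = 1"
    using ls1[OF j] sum_split2[of ?k "p j"] k by (simp add: s_def add.assoc)
  have "0 < (\<Sum>v<?k-2. p j v)"
    using ld1[of j] j k by (intro sum_pos) (auto simp: lessThan_empty_iff)
  then have slt: "s < 1" using sum1 by linarith
  have q: "0 < q" "q < 1" using a1 a2 spos by (auto simp: q_def s_def field_simps)
  have "latent_dist (split_fcs S j) p'"
    unfolding latent_dist_def split_simps
  proof (intro allI impI conjI)
    fix i v assume i: "i < Suc ?n" and v: "v < ((card_lat S)(j := ?k - 1, ?n := 2)) i"
    have "0 < p' i v \<and> p' i v < 1"
    proof (cases "i = ?n")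
      case True then show ?thesis using q by (auto simp: p'_def)
    next
      case False
      then have i': "i < ?n" using i by simp
      show ?thesis
      proof (cases "i = j")
        case True
        then show ?thesis using v jn ld1[of j v] j spos slt by (auto simp: p'_def)
      next
        case f2: False
        then show ?thesis using v False ld1[of i v] i' by (auto simp: p'_def)
      qed
    qed
    then show "0 < p' i v" "p' i v < 1" by auto
  next
    fix i assume i: "i < Suc ?n"
    show "(\<Sum>v<((card_lat S)(j := ?k - 1, ?n := 2)) i. p' i v) = 1"
    proof (cases "i = ?n")
      case True then show ?thesis by (simp add: p'_def numeral_2_eq_2)
    next
      case False
      then have i': "i < ?n" using i by simp
      show ?thesis
      proof (cases "i = j")
        case True
        have "(\<Sum>v<?k-1. p' j v) = (\<Sum>v<?k-2. p' j v) + p' j (?k-2)"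
          using k by (intro sum_split1) auto
        also have "(\<Sum>v<?k-2. p' j v) = (\<Sum>v<?k-2. p j v)" using jn by (simp add: p'_def)
        also have "p' j (?k-2) = s" using jn by (simp add: p'_def)
        finally show ?thesis using True jn sum1 by simp
      next
        case f2: False
        then show ?thesis using ls1[OF i'] False by (simp add: p'_def)
      qed
    qed
  qed
  moreover have "induced (split_fcs S j) p' = induced S p"
  proof (intro ext)
    fix a b
    have r3: "p j (?k-2) = p' j (?k-2) * p' ?n 0" using spos jn by (simp add: p'_def q_def)
    have r4: "p j (?k-1) = p' j (?k-2) * p' ?n 1" using spos jn k
      by (simp add: p'_def q_def s_def field_simps)
    show "induced (split_fcs S j) p' a b = induced S p a b"
    proof -
      have r1: "\<forall>i<nlat S. i\<noteq>j \<longrightarrow> p i = p' i" using jn by (auto simp: p'_def)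
      have r2: "\<forall>v < card_lat S j - 2. p j v = p' j v" using jn k by (auto simp: p'_def)
      have r5: "p' (nlat S) 0 + p' (nlat S) 1 = 1" by (simp add: p'_def)
      show ?thesis by (rule core[OF j k r1 r2 r3 r4 r5])
    qed
  qed
  ultimately show "P \<in> joint_dists (split_fcs S j)" using P by (auto simp: joint_dists_def)
qed

definition mu :: "fcs \<Rightarrow> nat" where
  "mu S = (\<Sum>i<nlat S. card_lat S i - 2)"

lemma mu_split:
  assumes j: "j < nlat S" and k: "3 \<le> card_lat S j"
  shows "mu (split_fcs S j) < mu S"
proof -
  have jn: "j \<noteq> nlat S" using j by simp
  have "mu (split_fcs S j) = (\<Sum>i<nlat S. ((card_lat S)(j := card_lat S j - 1)) i - 2)"
    unfolding mu_def split_simps by (simp add: jn)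
  also have "\<dots> < (\<Sum>i<nlat S. card_lat S i - 2)"
    by (rule sum_strict_mono_ex1) (use j k in auto)
  finally show ?thesis by (simp add: mu_def)
qed

lemma main:
  "wf_fcs S \<Longrightarrow> \<exists>T. wf_fcs T \<and> binary_fcs T \<and> joint_dists S = joint_dists T"
proof (induction "mu S" arbitrary: S rule: less_induct)
  case less
  show ?case
  proof (cases "\<exists>j<nlat S. 3 \<le> card_lat S j")
    case True
    then obtain j where j: "j < nlat S" and k: "3 \<le> card_lat S j" by auto
    have "wf_fcs (split_fcs S j)" by (rule wf_split[OF less.prems j k])
    from less.hyps[OF mu_split[OF j k] this] obtain T where
      "wf_fcs T" "binary_fcs T" "joint_dists (split_fcs S j) = joint_dists T" by auto
    then show ?thesis using dists_split[OF j k] by auto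
  next
    case False
    have "\<forall>i<nlat S. 2 \<le> card_lat S i" using less.prems by (simp add: wf_fcs_def)
    then have "binary_fcs S" using False by (force simp: binary_fcs_def)
    then show ?thesis using less.prems by auto
  qed
qed

theorem theorem1:
  assumes "wf_fcs S"
  shows "\<exists>T. wf_fcs T \<and> binary_fcs T \<and> obs_equiv S T"
  using main[OF assms] by (simp add: obs_equiv_def)

end
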